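(* Let $n_0,n_1,n_\infty$ be integers with $1\le n_0\le n_1\le n_\infty$ and $n=n_0+n_1+n_\infty$, and let $\overline{\mathcal{S}}=\{[\xi:\eta:\zeta]\in\mathbb{CP}^2 : \zeta^{n-n_0-n_1}\eta^n-\xi^{n-n_0}(\zeta-\xi)^{n-n_1}=0\}$. Then the singular points of $\overline{\mathcal{S}}$ are $[0:0:1]$, $[1:0:1]$, and, if $n_\infty>1$, also $[0:1:0]$. *)

theory Defs
  imports "HOL-Analysis.Analysis"
begin

definition curveF :: "nat \<Rightarrow> nat \<Rightarrow> nat \<Rightarrow> complex \<Rightarrow> complex \<Rightarrow> complex \<Rightarrow> complex" where
  "curveF n0 n1 ninf \<xi> \<eta> \<zeta> =
     (let n = n0 + n1 + ninf in \<zeta> ^ (n - n0 - n1) * \<eta> ^ n - \<xi> ^ (n - n0) * (\<zeta> - \<xi>) ^ (n - n1))"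

definition singular_point ::
  "(complex \<Rightarrow> complex \<Rightarrow> complex \<Rightarrow> complex) \<Rightarrow> complex \<Rightarrow> complex \<Rightarrow> complex \<Rightarrow> bool" where
  "singular_point F x y z \<longleftrightarrow>
     (x, y, z) \<noteq> (0, 0, 0) \<and> F x y z = 0 \<and>
     deriv (\<lambda>t. F t y z) x = 0 \<and> deriv (\<lambda>t. F x t z) y = 0 \<and> deriv (\<lambda>t. F x y t) z = 0"

definition proj_eq :: "complex \<times> complex \<times> complex \<Rightarrow> complex \<times> complex \<times> complex \<Rightarrow> bool" where
  "proj_eq p q \<longleftrightarrow> (\<exists>c. c \<noteq> 0 \<and> fst p = c * fst q \<and> fst (snd p) = c * fst (snd q)
                          \<and> snd (snd p) = c * snd (snd q))"

end

theory Submission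
  imports Defs
begin

lemma curveF_eq: "curveF n0 n1 ninf = (\<lambda>x y z. z ^ ninf * y ^ (n0+n1+ninf) - x ^ (n1+ninf) * (z - x) ^ (n0+ninf))"
  by (auto simp: curveF_def Let_def fun_eq_iff)

lemma dx: "deriv (\<lambda>t. z ^ c * y ^ n - t ^ a * (z - t) ^ b) x
   = - (of_nat a * x^(a-1) * (z-x)^b - x^a * (of_nat b * (z-x)^(b-1)))"
proof (rule DERIV_imp_deriv)
  show "((\<lambda>t. z ^ c * y ^ n - t ^ a * (z - t) ^ b) has_field_derivative
     - (of_nat a * x^(a-1) * (z-x)^b - x^a * (of_nat b * (z-x)^(b-1)))) (at x)"
    by (auto intro!: derivative_eq_intros simp: algebra_simps)
qed

lemma dy: "deriv (\<lambda>t. z ^ c * t ^ n - x ^ a * (z - x) ^ b) y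
   = z^c * (of_nat n * y^(n-1))"
proof (rule DERIV_imp_deriv)
  show "((\<lambda>t. z ^ c * t ^ n - x ^ a * (z - x) ^ b) has_field_derivative
     z^c * (of_nat n * y^(n-1))) (at y)"
    by (auto intro!: derivative_eq_intros simp: algebra_simps)
qed

lemma dz: "deriv (\<lambda>t. t ^ c * y ^ n - x ^ a * (t - x) ^ b) z
   = of_nat c * z^(c-1) * y^n - x^a * (of_nat b * (z-x)^(b-1))"
proof (rule DERIV_imp_deriv)
  show "((\<lambda>t. t ^ c * y ^ n - x ^ a * (t - x) ^ b) has_field_derivative
     (of_nat c * z^(c-1) * y^n - x^a * (of_nat b * (z-x)^(b-1)))) (at z)"
    by (auto intro!: derivative_eq_intros simp: algebra_simps)
qed


lemma proj1: "proj_eq (x, y, z) (0, 0, 1) \<longleftrightarrow> x = 0 \<and> y = 0 \<and> z \<noteq> 0"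
  by (auto simp: proj_eq_def)
lemma proj2: "proj_eq (x, y, z) (1, 0, 1) \<longleftrightarrow> y = 0 \<and> z = x \<and> x \<noteq> 0"
  by (auto simp: proj_eq_def)
lemma proj3: "proj_eq (x, y, z) (0, 1, 0) \<longleftrightarrow> x = 0 \<and> z = 0 \<and> y \<noteq> 0"
  by (auto simp: proj_eq_def)

lemma main:
  fixes x y z :: complex and a b c n :: nat
  assumes a: "a \<ge> 2" and b: "b \<ge> 2" and c: "c \<ge> 1" and n: "n \<ge> 3"
    and nz: "(x, y, z) \<noteq> (0, 0, 0)"
  shows "(z ^ c * y ^ n - x ^ a * (z - x) ^ b = 0 \<and>
      - (of_nat a * x^(a-1) * (z-x)^b - x^a * (of_nat b * (z-x)^(b-1))) = 0 \<and>
      z^c * (of_nat n * y^(n-1)) = 0 \<and>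
      of_nat c * z^(c-1) * y^n - x^a * (of_nat b * (z-x)^(b-1)) = 0)
   \<longleftrightarrow> (x = 0 \<and> y = 0) \<or> (y = 0 \<and> z = x) \<or> (c > 1 \<and> x = 0 \<and> z = 0)"
proof
  assume H: "z ^ c * y ^ n - x ^ a * (z - x) ^ b = 0 \<and>
      - (of_nat a * x^(a-1) * (z-x)^b - x^a * (of_nat b * (z-x)^(b-1))) = 0 \<and>
      z^c * (of_nat n * y^(n-1)) = 0 \<and>
      of_nat c * z^(c-1) * y^n - x^a * (of_nat b * (z-x)^(b-1)) = 0"
  show "(x = 0 \<and> y = 0) \<or> (y = 0 \<and> z = x) \<or> (c > 1 \<and> x = 0 \<and> z = 0)"
  proof (cases "y = 0")
    case True
    have "0 ^ n = (0::complex)" using n by simp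
    with H True have "x ^ a * (z - x) ^ b = 0" by simp
    then show ?thesis using True a b by auto
  next
    case False
    with H n have z0: "z = 0" by simp
    have "0 ^ c = (0::complex)" using c by simp
    with H z0 have "x ^ a * (- x) ^ b = 0" by simp
    hence x0: "x = 0" using a b by simp
    show ?thesis
    proof (cases "c = 1")
      case True
      have "0 ^ a = (0::complex)" using a by simp
      with H z0 x0 True False show ?thesis by simp
    next
      case False
      with c z0 x0 show ?thesis by simp
    qed
  qed
next
  assume that: "(x = 0 \<and> y = 0) \<or> (y = 0 \<and> z = x) \<or> (c > 1 \<and> x = 0 \<and> z = 0)"
  show "z ^ c * y ^ n - x ^ a * (z - x) ^ b = 0 \<and>
      - (of_nat a * x^(a-1) * (z-x)^b - x^a * (of_nat b * (z-x)^(b-1))) = 0 \<and>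
      z^c * (of_nat n * y^(n-1)) = 0 \<and>
      of_nat c * z^(c-1) * y^n - x^a * (of_nat b * (z-x)^(b-1)) = 0"
  proof -
    obtain a2 where a': "a = Suc (Suc a2)" using a by (intro that[of "a - 2"]) arith
    obtain b2 where b': "b = Suc (Suc b2)" using b by (intro that[of "b - 2"]) arith
    obtain n2 where n': "n = Suc (Suc n2)" using n by (intro that[of "n - 2"]) arith
    obtain c2 where c': "c = Suc c2" using c by (intro that[of "c - 1"]) arith
    from that show ?thesis
    proof (elim disjE conjE)
      assume "c > 1" "x = 0" "z = 0"
      then obtain c3 where "c = Suc (Suc c3)" by (intro that[of "c - 2"]) arith
      then show ?thesis using \<open>x = 0\<close> \<open>z = 0\<close> a' b' n' by simp
    qed (simp_all add: a' b' n' c')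
  qed
qed

theorem corollary2:
  fixes n0 n1 ninf :: nat
  assumes "1 \<le> n0" "n0 \<le> n1" "n1 \<le> ninf"
  shows "\<forall>x y z. (x, y, z) \<noteq> (0, 0, 0) \<longrightarrow>
           (singular_point (curveF n0 n1 ninf) x y z \<longleftrightarrow>
              proj_eq (x, y, z) (0, 0, 1) \<or> proj_eq (x, y, z) (1, 0, 1) \<or>
              (ninf > 1 \<and> proj_eq (x, y, z) (0, 1, 0)))"
proof (intro allI impI)
  fix x y z :: complex
  assume nz: "(x, y, z) \<noteq> (0, 0, 0)"
  have "singular_point (curveF n0 n1 ninf) x y z \<longleftrightarrow>
    (x = 0 \<and> y = 0) \<or> (y = 0 \<and> z = x) \<or> (ninf > 1 \<and> x = 0 \<and> z = 0)"
    unfolding singular_point_def curveF_eq dx dy dz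
    using main[of "n1+ninf" "n0+ninf" ninf "n0+n1+ninf" x y z] assms nz by simp
  then show "singular_point (curveF n0 n1 ninf) x y z \<longleftrightarrow>
              proj_eq (x, y, z) (0, 0, 1) \<or> proj_eq (x, y, z) (1, 0, 1) \<or>
              (ninf > 1 \<and> proj_eq (x, y, z) (0, 1, 0))"
    unfolding proj1 proj2 proj3 using nz by auto
qed

end
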